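(* Let $T=7$ (so $\mathit{CP}=\{0\}$) and $D\ge 1$. Let $G$ be the path $v_0 - v_1 - \dots - v_D$, and suppose the adversary activates only $v_0$, in round $0$ (all other nodes are activated by beeps of neighbors). Then under Algorithm FS, the smallest round $t$ such that $\delta_t(v_0)=\delta_t(v_1)=\dots=\delta_t(v_D)$ (with all nodes active) is exactly $t=7D$. Hence the bound $4D+\lfloor D/\lfloor T/4\rfloor\rfloor\cdot(T\bmod 4)$ of Theorem 1 is attained.
   Context: Model (beeping model with arbitrary activations). Synchronous rounds; in each round each active node either beeps or listens; a listening node learns only whether at least one neighbor beeped. Checkpoints: $\mathit{CP}=\{c\in\mathbb{N}_0: c\equiv 0\pmod 4,\ T-c>3\}$. Algorithm FS. Each node $v$ stores $\delta(v)\in\{0,\dots,T-1\}$, $\mathit{State}(v)\in\{\mathit{Inactive},\mathit{Beep},\mathit{Listen}\}$, $\mathit{Induced}(v)\in\{\mathit{true},\mathit{false}\}$. Initially all nodes are Inactive. A node $v$ is activated in round $t$ if the adversary activates it in round $t$, or $v$ is inactive and some neighbor beeps in round $t-1$; then at the beginning of round $t$, $\delta(v)=1$, $\mathit{State}(v)=\mathit{Beep}$, $\mathit{Induced}(v)=\mathit{true}$. In each round each active node $v$, according to its state at the beginning of the round: (1) if $\mathit{State}(v)=\mathit{Beep}$: beeps; $\delta(v)\gets\delta(v)+1\bmod T$; $\mathit{State}(v)\gets\mathit{Listen}$; (2) if $\mathit{State}(v)=\mathit{Listen}$ and some neighbor beeps: if $\delta(v)\equiv c-1\pmod T$ for some $c\in\mathit{CP}$,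 then $\delta(v)\gets\delta(v)+2\bmod T$, $\mathit{State}(v)\gets\mathit{Beep}$, $\mathit{Induced}(v)\gets\mathit{true}$; else $\delta(v)\gets\delta(v)+1\bmod T$; (3) if $\mathit{State}(v)=\mathit{Listen}$ and no neighbor beeps: $\delta(v)\gets\delta(v)+1\bmod T$; then if ($\mathit{Induced}(v)=\mathit{true}$ and new $\delta(v)\in\mathit{CP}$) or new $\delta(v)=0$: $\mathit{State}(v)\gets\mathit{Beep}$, $\mathit{Induced}(v)\gets\mathit{false}$. $\delta_t(v)$ denotes the value at the beginning of round $t$. *)

theory Defs
  imports Main
begin

datatype phase = Beep | Listen

text \<open>Local state of a node: Inactive, or active with delta value, State (Beep/Listen),
  and Induced flag.\<close>
datatype nstate = Inactive | Act nat phase bool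

definition is_CP :: "nat \<Rightarrow> nat \<Rightarrow> bool" where
  "is_CP T c \<longleftrightarrow> c mod 4 = 0 \<and> int T - int c > 3"

fun beeps :: "nstate \<Rightarrow> bool" where
  "beeps (Act d Beep ind) = True"
| "beeps _ = False"

fun is_active :: "nstate \<Rightarrow> bool" where
  "is_active Inactive = False"
| "is_active (Act d p ind) = True"

fun delta_of :: "nstate \<Rightarrow> nat" where
  "delta_of (Act d p ind) = d"
| "delta_of Inactive = 0"

fun node_step :: "nat \<Rightarrow> nstate \<Rightarrow> bool \<Rightarrow> nstate" where
  "node_step T Inactive heard = (if heard then Act 1 Beep True else Inactive)"
| "node_step T (Act d Beep ind) heard = Act ((d + 1) mod T) Listen ind"
| "node_step T (Act d Listen ind) heard =
     (if heard then
        (if \<exists>c. is_CP T c \<and> int d mod int T = (int c - 1) mod int T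
         then Act ((d + 2) mod T) Beep True
         else Act ((d + 1) mod T) Listen ind)
      else
        (let d' = (d + 1) mod T in
         if (ind \<and> is_CP T d') \<or> d' = 0 then Act d' Beep False else Act d' Listen ind))"

definition adv_act :: "bool \<Rightarrow> nstate \<Rightarrow> nstate" where
  "adv_act a s = (if a then Act 1 Beep True else s)"

text \<open>Execution of Algorithm FS: E is the (symmetric) adjacency relation,
  A t v means the adversary activates v in round t.
  fs_run T E A t v is the state of v at the beginning of round t.\<close>
fun fs_run :: "nat \<Rightarrow> (nat \<Rightarrow> nat \<Rightarrow> bool) \<Rightarrow> (nat \<Rightarrow> nat \<Rightarrow> bool) \<Rightarrow> nat \<Rightarrow> nat \<Rightarrow> nstate" where
  "fs_run T E A 0 v = adv_act (A 0 v) Inactive"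
| "fs_run T E A (Suc t) v =
     adv_act (A (Suc t) v)
       (node_step T (fs_run T E A t v) (\<exists>u. E v u \<and> beeps (fs_run T E A t u)))"

definition path_adj :: "nat \<Rightarrow> nat \<Rightarrow> nat \<Rightarrow> bool" where
  "path_adj D i j \<longleftrightarrow> i \<le> D \<and> j \<le> D \<and> (j = i + 1 \<or> i = j + 1)"

definition synced :: "nat \<Rightarrow> (nat \<Rightarrow> nat \<Rightarrow> bool) \<Rightarrow> (nat \<Rightarrow> nat \<Rightarrow> bool) \<Rightarrow> nat \<Rightarrow> nat \<Rightarrow> bool" where
  "synced T E A D t \<longleftrightarrow>
     (\<forall>i\<le>D. is_active (fs_run T E A t i)) \<and>
     (\<forall>i\<le>D. delta_of (fs_run T E A t i) = delta_of (fs_run T E A t 0))"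

end

theory Submission imports Defs begin

definition F :: "nat \<Rightarrow> nat \<Rightarrow> nstate" where
  "F i t = (if t < i then Inactive
    else if t < 7*i+6 then Act ((t-i) mod 6 + 1) (if (t-i) mod 6 = 0 then Beep else Listen) True
    else Act ((t+1) mod 7) (if (t+1) mod 7 = 0 then Beep else Listen) False)"

definition B :: "nat \<Rightarrow> nat \<Rightarrow> bool" where
  "B i t \<longleftrightarrow> i \<le> t \<and> (if t < 7*i+6 then (t-i) mod 6 = 0 else (t+1) mod 7 = 0)"

lemma beeps_F: "beeps (F i t) = B i t"
  by (simp add: F_def B_def)

lemma cp7: "(\<exists>c. is_CP 7 c \<and> int d mod int 7 = (int c - 1) mod int 7) \<longleftrightarrow> d mod 7 = 6"
proof -
  have "is_CP 7 c \<longleftrightarrow> c = 0" for c unfolding is_CP_def by presburger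
  moreover have "int d mod 7 = -1 mod 7 \<longleftrightarrow> d mod 7 = 6"
  proof -
    have "(-1::int) mod 7 = 6" by simp
    moreover have "int d mod 7 = int (d mod 7)" by (simp add: zmod_int)
    ultimately show ?thesis by simp
  qed
  ultimately show ?thesis by auto
qed

lemma is_CP7: "is_CP 7 c \<longleftrightarrow> c = 0" unfolding is_CP_def by presburger

lemma B_lt: "t < v \<Longrightarrow> ((0 < v \<and> B (v-1) t) \<or> (v < D \<and> B (v+1) t)) \<longleftrightarrow> Suc t = v"
  unfolding B_def by (cases "Suc t = v") auto

lemma B_five:
  assumes "v \<le> t" "t < 7*v+5" "(t-v) mod 6 = 5"
  shows "0 < v \<and> B (v-1) t"
proof -
  define q where "q = (t - v) div 6"
  have "t - v = 6*q + (t-v) mod 6" unfolding q_def by simp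
  then have tq: "t = v + 6*q + 5" using assms(1,3) by simp
  have qv: "q < v" using assms(2) tq by simp
  then have v: "0 < v" by simp
  show ?thesis
  proof (cases "q < v - 1")
    case True
    then have lt: "t < 7*(v-1)+6" using tq v by simp
    have "t - (v-1) = 6*(q+1)" using tq v by simp
    then have "(t-(v-1)) mod 6 = 0" by simp
    then show ?thesis using lt v tq unfolding B_def by auto
  next
    case False
    then have q: "q = v - 1" using qv by simp
    then have "t + 1 = 7*v" using tq v by simp
    then have "(t+1) mod 7 = 0" by simp
    moreover have "\<not> t < 7*(v-1)+6" using tq q v by simp
    ultimately show ?thesis using v tq unfolding B_def by auto
  qed
qed

lemma B_edge:
  assumes "t = 7*v+5"
  shows "\<not> ((0 < v \<and> B (v-1) t) \<or> (v < D \<and> B (v+1) t))"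
proof -
  have 1: "\<not> (0 < v \<and> B (v-1) t)"
  proof
    assume a: "0 < v \<and> B (v-1) t"
    have "\<not> t < 7*(v-1)+6" using assms a by (cases v) auto
    moreover have "(t+1) mod 7 = 6"
    proof -
      have "t + 1 = 6 + 7*v" using assms by simp
      then show ?thesis by simp
    qed
    ultimately show False using a unfolding B_def by simp
  qed
  have 2: "\<not> B (v+1) t"
  proof
    assume a: "B (v+1) t"
    have "t < 7*(v+1)+6" using assms by simp
    moreover have "(t-(v+1)) mod 6 = 4"
    proof -
      have "t - (v+1) = 4 + 6*v" using assms by simp
      then show ?thesis by simp
    qed
    ultimately show False using a unfolding B_def by simp
  qed
  show ?thesis using 1 2 by blast
qed

lemma B_big:
  assumes "\<not> t < 7*v+6" "(t+1) mod 7 = 6"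
  shows "\<not> ((0 < v \<and> B (v-1) t) \<or> (v < D \<and> B (v+1) t))"
proof -
  have 1: "\<not> (0 < v \<and> B (v-1) t)"
  proof
    assume a: "0 < v \<and> B (v-1) t"
    have "\<not> t < 7*(v-1)+6" using assms by simp
    then show False using a assms unfolding B_def by simp
  qed
  have 2: "\<not> B (v+1) t"
  proof
    assume a: "B (v+1) t"
    show False
    proof (cases "t < 7*(v+1)+6")
      case True
      define k where "k = (t+1) div 7"
      have "t + 1 = 7*k + (t+1) mod 7" unfolding k_def by simp
      then have tk: "t = 7*k + 5" using assms(2) by simp
      have "k = v + 1" using tk True assms(1) by presburger
      then have "t - (v+1) = 5 + 6*(v+1)" using tk by simp
      then have "(t-(v+1)) mod 6 = 5" by simp
      then show False using a True unfolding B_def by simp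
    next
      case False
      then show False using a assms unfolding B_def by simp
    qed
  qed
  show ?thesis using 1 2 by blast
qed

lemma step_F:
  assumes h: "h \<longleftrightarrow> (0 < v \<and> B (v-1) t) \<or> (v < D \<and> B (v+1) t)"
  shows "node_step 7 (F v t) h = F v (Suc t)"
proof (cases "t < v")
  case True
  have "h \<longleftrightarrow> Suc t = v" using B_lt[OF True] h by blast
  then show ?thesis using True by (auto simp: F_def)
next
  case ge: False
  show ?thesis
  proof (cases "t < 7*v+6")
    case lt: True
    define s where "s = (t-v) mod 6"
    have s6: "s < 6" unfolding s_def by simp
    have Ft: "F v t = Act (s+1) (if s = 0 then Beep else Listen) True"
      using ge lt unfolding F_def s_def by simp
    show ?thesis
    proof (cases "t = 7*v+5")
      case True
      have "t - v = 5 + 6*v" using True by simp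
      then have s5: "s = 5" unfolding s_def by simp
      have "\<not> h" using B_edge[OF True] h by blast
      moreover have "F v (Suc t) = Act 0 Beep False"
      proof -
        have "Suc t + 1 = 7*(v+1)" using True by simp
        then have "(Suc t + 1) mod 7 = 0" by simp
        then show ?thesis unfolding F_def using True by simp
      qed
      ultimately show ?thesis using Ft s5 by (simp add: cp7 is_CP7 Let_def)
    next
      case ne: False
      have lt2: "Suc t < 7*v+6" using lt ne by simp
      have s2: "(Suc t - v) mod 6 = (s+1) mod 6" unfolding s_def using ge
        by (simp add: Suc_diff_le mod_Suc_eq)
      have FS: "F v (Suc t) = Act ((s+1) mod 6 + 1) (if (s+1) mod 6 = 0 then Beep else Listen) True"
        using lt2 ge s2 unfolding F_def by simp
      show ?thesis
      proof (cases "s = 5")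
        case True
        have "h" using B_five[of v t] ge lt ne True h unfolding s_def by auto
        then show ?thesis using Ft FS True by (simp add: cp7 is_CP7)
      next
        case False
        have "(s+1) mod 6 = s+1" "(s+2) mod 7 = s + 2" "s + 2 \<noteq> 0" using False s6 by auto
        moreover have "\<not> is_CP 7 (s+2)" by (simp add: is_CP7)
        ultimately show ?thesis using Ft FS False s6 by (auto simp: cp7 is_CP7 Let_def)
      qed
    qed
  next
    case big: False
    define r where "r = (t+1) mod 7"
    have r7: "r < 7" unfolding r_def by simp
    have Ft: "F v t = Act r (if r = 0 then Beep else Listen) False"
      using ge big unfolding F_def r_def by simp
    have r2: "(Suc t + 1) mod 7 = (r+1) mod 7" unfolding r_def by (simp add: mod_Suc_eq)
    have FS: "F v (Suc t) = Act ((r+1) mod 7) (if (r+1) mod 7 = 0 then Beep else Listen) False"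
      using big r2 unfolding F_def by simp
    show ?thesis
    proof (cases "r = 6")
      case True
      have "\<not> h" using B_big[of t v D] big True h unfolding r_def by blast
      then show ?thesis using Ft FS True by (simp add: cp7 is_CP7 Let_def)
    next
      case False
      have "(r+1) mod 7 = r + 1" using False r7 by simp
      then show ?thesis using Ft FS False r7 by (auto simp: cp7 is_CP7 Let_def)
    qed
  qed
qed

lemma run_F:
  "fs_run 7 (path_adj D) (\<lambda>t v. t = 0 \<and> v = 0) t v = (if v \<le> D then F v t else Inactive)"
proof (induction t arbitrary: v)
  case 0
  then show ?case by (auto simp: adv_act_def F_def)
next
  case (Suc t)
  show ?case
  proof (cases "v \<le> D")
    case True
    have "(\<exists>u. path_adj D v u \<and> beeps (fs_run 7 (path_adj D) (\<lambda>t v. t = 0 \<and> v = 0) t u))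
       \<longleftrightarrow> (0 < v \<and> B (v-1) t) \<or> (v < D \<and> B (v+1) t)"
    proof
      assume "\<exists>u. path_adj D v u \<and> beeps (fs_run 7 (path_adj D) (\<lambda>t v. t = 0 \<and> v = 0) t u)"
      then obtain u where u: "path_adj D v u" "beeps (if u \<le> D then F u t else Inactive)"
        unfolding Suc.IH by blast
      then have "u \<le> D" "B u t" "u = v + 1 \<or> v = u + 1" unfolding path_adj_def
        by (auto simp: beeps_F split: if_splits)
      then show "(0 < v \<and> B (v-1) t) \<or> (v < D \<and> B (v+1) t)" by auto
    next
      assume a: "(0 < v \<and> B (v-1) t) \<or> (v < D \<and> B (v+1) t)"
      show "\<exists>u. path_adj D v u \<and> beeps (fs_run 7 (path_adj D) (\<lambda>t v. t = 0 \<and> v = 0) t u)"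
      proof (cases "0 < v \<and> B (v-1) t")
        case True
        then show ?thesis using \<open>v \<le> D\<close> unfolding Suc.IH path_adj_def
          by (intro exI[of _ "v-1"]) (auto simp: beeps_F)
      next
        case False
        then have "v < D \<and> B (v+1) t" using a by blast
        then show ?thesis unfolding Suc.IH path_adj_def
          by (intro exI[of _ "v+1"]) (auto simp: beeps_F)
      qed
    qed
    then show ?thesis using True step_F[OF refl, of v t D] by (simp add: adv_act_def Suc.IH)
  next
    case False
    then have "fs_run 7 (path_adj D) (\<lambda>t v. t = 0 \<and> v = 0) t v = Inactive" using Suc.IH by simp
    moreover have "\<not> path_adj D v u" for u using False unfolding path_adj_def by simp
    ultimately show ?thesis using False by (simp add: adv_act_def)
  qed
qed

theorem mainTheorem3:
  fixes D :: nat
  assumes "D \<ge> 1"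
  shows "synced 7 (path_adj D) (\<lambda>t v. t = 0 \<and> v = 0) D (7 * D)
       \<and> (\<forall>t < 7 * D. \<not> synced 7 (path_adj D) (\<lambda>t v. t = 0 \<and> v = 0) D t)
       \<and> 7 * D = 4 * D + (D div (7 div 4)) * (7 mod 4)"
proof (intro conjI allI impI)
  have d1: "delta_of (F i (7*D)) = 1 \<and> is_active (F i (7*D))" if "i \<le> D" for i
  proof (cases "i = D")
    case True
    have "7*D - D = 6*D" by simp
    then have "(7*D - D) mod 6 = 0" by simp
    then show ?thesis using True by (simp add: F_def)
  next
    case False
    then have "\<not> 7*D < 7*i+6" using that by simp
    moreover have "(7*D+1) mod 7 = 1" by simp
    ultimately show ?thesis using that by (simp add: F_def)
  qed
  show "synced 7 (path_adj D) (\<lambda>t v. t = 0 \<and> v = 0) D (7 * D)"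
    unfolding synced_def run_F using d1 by auto
next
  fix t assume t: "t < 7*D"
  show "\<not> synced 7 (path_adj D) (\<lambda>t v. t = 0 \<and> v = 0) D t"
  proof
    assume s: "synced 7 (path_adj D) (\<lambda>t v. t = 0 \<and> v = 0) D t"
    have act: "is_active (F D t)"
    proof -
      have "is_active (fs_run 7 (path_adj D) (\<lambda>t v. t = 0 \<and> v = 0) t D)"
        using s unfolding synced_def by blast
      then show ?thesis by (simp only: run_F order_refl if_True)
    qed
    have eq: "delta_of (F D t) = delta_of (F (D-1) t)"
    proof -
      have "D - 1 \<le> D" by (rule diff_le_self)
      have "delta_of (fs_run 7 (path_adj D) (\<lambda>t v. t = 0 \<and> v = 0) t D) = delta_of (fs_run 7 (path_adj D) (\<lambda>t v. t = 0 \<and> v = 0) t (D-1))"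
        using s \<open>D - 1 \<le> D\<close> unfolding synced_def by (metis order_refl)
      then show ?thesis using \<open>D - 1 \<le> D\<close> by (simp only: run_F order_refl if_True)
    qed
    have tD: "D \<le> t" using act by (auto simp: F_def split: if_splits)
    have dD: "delta_of (F D t) = (t-D) mod 6 + 1" using tD t by (simp add: F_def)
    show False
    proof (cases "t < 7*(D-1)+6")
      case True
      have "delta_of (F (D-1) t) = (t-(D-1)) mod 6 + 1" using True tD by (simp add: F_def)
      moreover have "(t-(D-1)) mod 6 \<noteq> (t-D) mod 6"
      proof -
        have "t-(D-1) = Suc (t-D)" using tD assms by simp
        then show ?thesis by (simp add: mod_Suc)
      qed
      ultimately show False using eq dD by simp
    next
      case False
      have m: "7*(D-1) = 7*D - 7" by (simp add: diff_mult_distrib2)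
      then have "t = 7*D - 1" using t assms False by linarith
      then have "t+1 = 7*D" using assms by simp
      then have "(t+1) mod 7 = 0" by simp
      then have "delta_of (F (D-1) t) = 0" using False by (simp add: F_def)
      then show False using eq dD by simp
    qed
  qed
next
  show "7 * D = 4 * D + (D div (7 div 4)) * (7 mod 4)" by simp
qed

end
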